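(* Let $M,M'\in\mathbb{C}^{2\times 2}$ be nonsingular matrices with $M'=M+\delta I$ for some nonzero $\delta\in\mathbb{C}$, where $M$ has distinct eigenvalues. If the two eigenvalues of $M$ have equal absolute value and the two eigenvalues of $M'$ have equal absolute value, then there exist $r,s\in\mathbb{R}$ such that $\mathrm{tr}(M)=r\delta$ and $\det(M)=s\delta^2$. *)

theory Defs
  imports "HOL-Analysis.Analysis"
begin

definition is_eigenvalue :: "'a::field ^'n^'n \<Rightarrow> 'a \<Rightarrow> bool" where
  "is_eigenvalue M lam \<longleftrightarrow> (\<exists>v. v \<noteq> 0 \<and> M *v v = lam *s v)"

end

theory Submission
  imports Defs
begin

lemma eig_char:
  fixes M :: "complex^2^2"
  assumes "is_eigenvalue M x"
  shows "x^2 - trace M * x + det M = 0"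
proof -
  obtain v where v: "v \<noteq> 0" "M *v v = x *s v" using assms unfolding is_eigenvalue_def by blast
  have e1: "M$1$1 * v$1 + M$1$2 * v$2 = x * v$1"
    using arg_cong[OF v(2), of "\<lambda>w. w$1"] by (simp add: matrix_vector_mult_def sum_2)
  have e2: "M$2$1 * v$1 + M$2$2 * v$2 = x * v$2"
    using arg_cong[OF v(2), of "\<lambda>w. w$2"] by (simp add: matrix_vector_mult_def sum_2)
  have nz: "v$1 \<noteq> 0 \<or> v$2 \<noteq> 0"
    using v(1) by (metis exhaust_2 vec_eq_iff zero_index)
  have c: "x^2 - trace M * x + det M = (M$1$1 - x) * (M$2$2 - x) - M$1$2 * M$2$1"
    by (simp add: det_2 trace_def sum_2 power2_eq_square algebra_simps)
  have d1: "((M$1$1 - x) * (M$2$2 - x) - M$1$2 * M$2$1) * v$1 = 0"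
  proof -
    have "((M$1$1 - x) * (M$2$2 - x) - M$1$2 * M$2$1) * v$1
      = (M$2$2 - x) * ((M$1$1 - x) * v$1 + M$1$2 * v$2) - M$1$2 * (M$2$1 * v$1 + (M$2$2 - x) * v$2)"
      by (simp add: algebra_simps)
    also have "\<dots> = 0" using e1 e2 by (simp add: algebra_simps)
    finally show ?thesis .
  qed
  have d2: "((M$1$1 - x) * (M$2$2 - x) - M$1$2 * M$2$1) * v$2 = 0"
  proof -
    have "((M$1$1 - x) * (M$2$2 - x) - M$1$2 * M$2$1) * v$2
      = (M$1$1 - x) * (M$2$1 * v$1 + (M$2$2 - x) * v$2) - M$2$1 * ((M$1$1 - x) * v$1 + M$1$2 * v$2)"
      by (simp add: algebra_simps)
    also have "\<dots> = 0" using e1 e2 by (simp add: algebra_simps)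
    finally show ?thesis .
  qed
  show ?thesis using c d1 d2 nz by auto
qed

lemma eig_shift:
  fixes M :: "complex^2^2"
  assumes "is_eigenvalue M x"
  shows "is_eigenvalue (M + mat d) (x + d)"
proof -
  obtain v where v: "v \<noteq> 0" "M *v v = x *s v" using assms unfolding is_eigenvalue_def by blast
  have "(M + mat d) *v v = (x + d) *s v"
  proof -
    have "mat d *v v = d *s v"
      by (simp add: vec_eq_iff forall_2 sum_2 mat_def matrix_vector_mult_def)
    thus ?thesis using v(2) by (simp add: matrix_vector_mult_add_rdistrib vector_sadd_rdistrib)
  qed
  thus ?thesis using v(1) unfolding is_eigenvalue_def by blast
qed

lemma cplx_part:
  fixes \<alpha> \<beta> :: complex
  assumes "\<alpha> \<noteq> \<beta>" "cmod \<alpha> = cmod \<beta>" "cmod (\<alpha> + 1) = cmod (\<beta> + 1)"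
  shows "\<alpha> + \<beta> = of_real (2 * Re \<alpha>) \<and> \<alpha> * \<beta> = of_real (Re \<alpha> ^ 2 + Im \<alpha> ^ 2)"
proof -
  have s1: "Re \<alpha> ^ 2 + Im \<alpha> ^ 2 = Re \<beta> ^ 2 + Im \<beta> ^ 2"
    using assms(2) by (simp add: cmod_def)
  have s2: "(Re \<alpha> + 1) ^ 2 + Im \<alpha> ^ 2 = (Re \<beta> + 1) ^ 2 + Im \<beta> ^ 2"
    using assms(3) by (simp add: cmod_def)
  have r: "Re \<alpha> = Re \<beta>" using s1 s2 by (simp add: power2_eq_square algebra_simps)
  have "Im \<alpha> ^ 2 = Im \<beta> ^ 2" using s1 r by simp
  hence "Im \<alpha> = Im \<beta> \<or> Im \<alpha> = - Im \<beta>" by (simp add: power2_eq_iff)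
  moreover have "Im \<alpha> \<noteq> Im \<beta>" using assms(1) r complex_eqI by blast
  ultimately have i: "Im \<alpha> = - Im \<beta>" by blast
  show ?thesis using r i
    by (auto intro!: complex_eqI simp: power2_eq_square)
qed

theorem corollary4p8:
  fixes M M' :: "complex^2^2" and \<delta> :: complex
  assumes "invertible M" and "invertible M'"
    and "\<delta> \<noteq> 0"
    and "M' = M + mat \<delta>"
    and "card {x. is_eigenvalue M x} = 2"
    and "\<forall>x y. is_eigenvalue M x \<and> is_eigenvalue M y \<longrightarrow> cmod x = cmod y"
    and "\<forall>x y. is_eigenvalue M' x \<and> is_eigenvalue M' y \<longrightarrow> cmod x = cmod y"
  shows "\<exists>r s :: real. trace M = complex_of_real r * \<delta> \<and> det M = complex_of_real s * \<delta>\<^sup>2"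
proof -
  obtain a b where ab: "{x. is_eigenvalue M x} = {a, b}" "a \<noteq> b"
    using assms(5) card_2_iff by metis
  have ea: "is_eigenvalue M a" and eb: "is_eigenvalue M b" using ab(1) by blast+
  have ca: "a^2 - trace M * a + det M = 0" using eig_char[OF ea] .
  have cb: "b^2 - trace M * b + det M = 0" using eig_char[OF eb] .
  have "(a - b) * (a + b - trace M) = (a^2 - trace M * a + det M) - (b^2 - trace M * b + det M)"
    by (simp add: power2_eq_square algebra_simps)
  hence "(a - b) * (a + b - trace M) = 0" using ca cb by simp
  hence tr: "trace M = a + b" using ab(2) by simp
  have dt: "det M = a * b" using ca tr by (simp add: power2_eq_square algebra_simps)
  have m1: "cmod a = cmod b" using assms(6) ea eb by blast
  have m2: "cmod (a + \<delta>) = cmod (b + \<delta>)"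
    using assms(7) eig_shift[OF ea, of \<delta>] eig_shift[OF eb, of \<delta>] assms(4) by blast
  define \<alpha> where "\<alpha> = a / \<delta>"
  define \<beta> where "\<beta> = b / \<delta>"
  have a: "a = \<alpha> * \<delta>" and b: "b = \<beta> * \<delta>" using assms(3) by (simp_all add: \<alpha>_def \<beta>_def)
  have "\<alpha> \<noteq> \<beta>" using ab(2) a b by auto
  moreover have "cmod \<alpha> = cmod \<beta>" using m1 by (simp add: \<alpha>_def \<beta>_def norm_divide)
  moreover have "cmod (\<alpha> + 1) = cmod (\<beta> + 1)"
  proof -
    have "\<alpha> + 1 = (a + \<delta>) / \<delta>" "\<beta> + 1 = (b + \<delta>) / \<delta>" using assms(3)
      by (simp_all add: \<alpha>_def \<beta>_def field_simps)
    thus ?thesis using m2 by (simp add: norm_divide)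
  qed
  ultimately have c: "\<alpha> + \<beta> = of_real (2 * Re \<alpha>) \<and> \<alpha> * \<beta> = of_real (Re \<alpha> ^ 2 + Im \<alpha> ^ 2)"
    by (rule cplx_part)
  have "trace M = (\<alpha> + \<beta>) * \<delta>" using tr a b by (simp add: distrib_right)
  hence "trace M = of_real (2 * Re \<alpha>) * \<delta>" using c by simp
  moreover have "det M = of_real (Re \<alpha> ^ 2 + Im \<alpha> ^ 2) * \<delta>\<^sup>2"
  proof -
    have "det M = (\<alpha> * \<beta>) * \<delta>\<^sup>2" using dt a b by (simp add: power2_eq_square algebra_simps)
    thus ?thesis using c by simp
  qed
  ultimately show ?thesis by blast
qed

end
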